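(* Let $\Omega$ be a finite set with $|\Omega|=n$, $(H_i\mid i\in\Omega)$ finite abelian groups with $|H_i|\geqslant2$ for all $i$, $\mathbf{H}=\prod_{i\in\Omega}H_i$, and $\mathbf{P}=(\Omega,\preccurlyeq_{\mathbf{P}})$ a poset. Then $\mathbf{P}$ is hierarchical if and only if for all $\alpha,\gamma\in\hat{\mathbf{H}}$, $\mathrm{wt}_{\overline{\mathbf{P}}}(\alpha)=\mathrm{wt}_{\overline{\mathbf{P}}}(\gamma)$ implies $\deg(F(\alpha))=\deg(F(\gamma))$.
   Context: $\hat{\mathbf{H}}$ is the character group of $\mathbf{H}$, identified with $\prod_i\hat{H_i}$ via $\alpha(\beta)=\prod_i\alpha_{(i)}(\beta_{(i)})$; $\mathrm{supp}$ of a codeword is the set of coordinates where it is not the identity. For a poset $\mathbf{Q}$ on $\Omega$, $\langle B\rangle_{\mathbf{Q}}=\{a:\exists b\in B, a\preccurlyeq_{\mathbf{Q}}b\}$ and $\mathrm{wt}_{\mathbf{Q}}(\beta)=|\langle\mathrm{supp}(\beta)\rangle_{\mathbf{Q}}|$. $\overline{\mathbf{P}}$ is the dual poset. For $\alpha\in\hat{\mathbf{H}}$, $F(\alpha)=\sum_{l=0}^{n}\big(\sum_{\beta\in\mathbf{H},\ \mathrm{wt}_{\mathbf{P}}(\beta)=l}\alpha(\beta)\big)x^l\in\mathbb{C}[x]$. $\mathrm{len}(y)$ is the largest cardinality of a chain in $\mathbf{P}$ with greatest element $y$; $\mathbf{P}$ is hierarchical if $\mathrm{len}(u)+1\leqslant\mathrm{len}(v)$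 implies $u\preccurlyeq_{\mathbf{P}}v$. *)

theory Defs
  imports "HOL-Algebra.Group" "HOL-Computational_Algebra.Polynomial"
begin

definition is_poset :: "'b set \<Rightarrow> ('b \<Rightarrow> 'b \<Rightarrow> bool) \<Rightarrow> bool" where
  "is_poset \<Omega> leq \<longleftrightarrow>
     (\<forall>a\<in>\<Omega>. leq a a) \<and>
     (\<forall>a\<in>\<Omega>. \<forall>b\<in>\<Omega>. leq a b \<and> leq b a \<longrightarrow> a = b) \<and>
     (\<forall>a\<in>\<Omega>. \<forall>b\<in>\<Omega>. \<forall>c\<in>\<Omega>. leq a b \<and> leq b c \<longrightarrow> leq a c)"

definition dual_order :: "('b \<Rightarrow> 'b \<Rightarrow> bool) \<Rightarrow> 'b \<Rightarrow> 'b \<Rightarrow> bool" where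
  "dual_order leq a b = leq b a"

definition ideal_gen :: "'b set \<Rightarrow> ('b \<Rightarrow> 'b \<Rightarrow> bool) \<Rightarrow> 'b set \<Rightarrow> 'b set" where
  "ideal_gen \<Omega> leq B = {a\<in>\<Omega>. \<exists>b\<in>B. leq a b}"

definition chain_top :: "'b set \<Rightarrow> ('b \<Rightarrow> 'b \<Rightarrow> bool) \<Rightarrow> 'b \<Rightarrow> 'b set \<Rightarrow> bool" where
  "chain_top \<Omega> leq y C \<longleftrightarrow> C \<subseteq> \<Omega> \<and> y \<in> C \<and>
     (\<forall>a\<in>C. \<forall>b\<in>C. leq a b \<or> leq b a) \<and> (\<forall>c\<in>C. leq c y)"

definition len :: "'b set \<Rightarrow> ('b \<Rightarrow> 'b \<Rightarrow> bool) \<Rightarrow> 'b \<Rightarrow> nat" where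
  "len \<Omega> leq y = Max (card ` {C. chain_top \<Omega> leq y C})"

definition hierarchical :: "'b set \<Rightarrow> ('b \<Rightarrow> 'b \<Rightarrow> bool) \<Rightarrow> bool" where
  "hierarchical \<Omega> leq \<longleftrightarrow>
     (\<forall>u\<in>\<Omega>. \<forall>v\<in>\<Omega>. len \<Omega> leq u + 1 \<le> len \<Omega> leq v \<longrightarrow> leq u v)"

definition codewords :: "'b set \<Rightarrow> ('b \<Rightarrow> ('a, 'c) monoid_scheme) \<Rightarrow> ('b \<Rightarrow> 'a) set" where
  "codewords \<Omega> G = (\<Pi>\<^sub>E i\<in>\<Omega>. carrier (G i))"

definition cw_supp :: "'b set \<Rightarrow> ('b \<Rightarrow> ('a, 'c) monoid_scheme) \<Rightarrow> ('b \<Rightarrow> 'a) \<Rightarrow> 'b set" where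
  "cw_supp \<Omega> G \<beta> = {i\<in>\<Omega>. \<beta> i \<noteq> \<one>\<^bsub>G i\<^esub>}"

definition wt :: "'b set \<Rightarrow> ('b \<Rightarrow> 'b \<Rightarrow> bool) \<Rightarrow> 'b set \<Rightarrow> nat" where
  "wt \<Omega> leq S = card (ideal_gen \<Omega> leq S)"

definition character :: "('a, 'c) monoid_scheme \<Rightarrow> ('a \<Rightarrow> complex) \<Rightarrow> bool" where
  "character G \<chi> \<longleftrightarrow> (\<forall>x\<in>carrier G. \<chi> x \<noteq> 0) \<and>
     (\<forall>x\<in>carrier G. \<forall>y\<in>carrier G. \<chi> (x \<otimes>\<^bsub>G\<^esub> y) = \<chi> x * \<chi> y)"

definition trivial_character :: "('a, 'c) monoid_scheme \<Rightarrow> ('a \<Rightarrow> complex) \<Rightarrow> bool" where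
  "trivial_character G \<chi> \<longleftrightarrow> (\<forall>x\<in>carrier G. \<chi> x = 1)"

text \<open>Characters of H, identified with families (alpha_i) of characters of the H_i.\<close>
definition char_family :: "'b set \<Rightarrow> ('b \<Rightarrow> ('a, 'c) monoid_scheme) \<Rightarrow> ('b \<Rightarrow> 'a \<Rightarrow> complex) \<Rightarrow> bool" where
  "char_family \<Omega> G \<alpha> \<longleftrightarrow> (\<forall>i\<in>\<Omega>. character (G i) (\<alpha> i))"

definition char_eval :: "'b set \<Rightarrow> ('b \<Rightarrow> 'a \<Rightarrow> complex) \<Rightarrow> ('b \<Rightarrow> 'a) \<Rightarrow> complex" where
  "char_eval \<Omega> \<alpha> \<beta> = (\<Prod>i\<in>\<Omega>. \<alpha> i (\<beta> i))"

definition char_supp :: "'b set \<Rightarrow> ('b \<Rightarrow> ('a, 'c) monoid_scheme) \<Rightarrow> ('b \<Rightarrow> 'a \<Rightarrow> complex) \<Rightarrow> 'b set" where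
  "char_supp \<Omega> G \<alpha> = {i\<in>\<Omega>. \<not> trivial_character (G i) (\<alpha> i)}"

definition F_poly :: "'b set \<Rightarrow> ('b \<Rightarrow> ('a, 'c) monoid_scheme) \<Rightarrow> ('b \<Rightarrow> 'b \<Rightarrow> bool)
    \<Rightarrow> ('b \<Rightarrow> 'a \<Rightarrow> complex) \<Rightarrow> complex poly" where
  "F_poly \<Omega> G leq \<alpha> =
     (\<Sum>l\<in>{0..card \<Omega>}.
        monom (\<Sum>\<beta>\<in>{\<beta>\<in>codewords \<Omega> G. wt \<Omega> leq (cw_supp \<Omega> G \<beta>) = l}. char_eval \<Omega> \<alpha> \<beta>) l)"

end

theory Submission
  imports Defs
begin
definition upS :: "'b set \<Rightarrow> ('b \<Rightarrow> 'b \<Rightarrow> bool) \<Rightarrow> 'b set \<Rightarrow> 'b set" where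
  "upS \<Omega> leq S = {a\<in>\<Omega>. \<exists>b\<in>S. leq b a}"
definition minS :: "('b \<Rightarrow> 'b \<Rightarrow> bool) \<Rightarrow> 'b set \<Rightarrow> 'b set" where
  "minS leq S = {s\<in>S. \<forall>s'\<in>S. leq s' s \<longrightarrow> s' = s}"
definition maxS :: "('b \<Rightarrow> 'b \<Rightarrow> bool) \<Rightarrow> 'b set \<Rightarrow> 'b set" where
  "maxS leq S = {s\<in>S. \<forall>s'\<in>S. leq s s' \<longrightarrow> s' = s}"
definition dclosed :: "'b set \<Rightarrow> ('b \<Rightarrow> 'b \<Rightarrow> bool) \<Rightarrow> 'b set \<Rightarrow> bool" where
  "dclosed \<Omega> leq I \<longleftrightarrow> I \<subseteq> \<Omega> \<and> (\<forall>x\<in>\<Omega>. \<forall>y\<in>I. leq x y \<longrightarrow> x \<in> I)"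

lemma po_refl: "is_poset \<Omega> leq \<Longrightarrow> a \<in> \<Omega> \<Longrightarrow> leq a a"
  unfolding is_poset_def by blast
lemma po_antisym: "is_poset \<Omega> leq \<Longrightarrow> a \<in> \<Omega> \<Longrightarrow> b \<in> \<Omega> \<Longrightarrow> leq a b \<Longrightarrow> leq b a \<Longrightarrow> a = b"
  unfolding is_poset_def by blast
lemma po_trans: "is_poset \<Omega> leq \<Longrightarrow> a \<in> \<Omega> \<Longrightarrow> b \<in> \<Omega> \<Longrightarrow> c \<in> \<Omega> \<Longrightarrow> leq a b \<Longrightarrow> leq b c \<Longrightarrow> leq a c"
  unfolding is_poset_def by blast

lemma poset_dual: "is_poset \<Omega> leq \<Longrightarrow> is_poset \<Omega> (\<lambda>a b. leq b a)"
  unfolding is_poset_def by blast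

lemma ex_max:
  assumes P: "is_poset \<Omega> leq" and fin: "finite X" and sub: "X \<subseteq> \<Omega>" and x: "x \<in> X"
  shows "\<exists>m\<in>maxS leq X. leq x m"
proof -
  have "\<exists>m. (m \<in> X \<and> leq x m) \<and> (\<forall>y. (y \<in> X \<and> leq x y) \<longrightarrow>
      card {z\<in>X. leq m z} \<le> card {z\<in>X. leq y z})"
    by (rule ex_has_least_nat[where k = x]) (use x P sub in \<open>auto intro: po_refl\<close>)
  then obtain m where m: "m \<in> X" "leq x m"
    and least: "\<And>y. y \<in> X \<Longrightarrow> leq x y \<Longrightarrow> card {z\<in>X. leq m z} \<le> card {z\<in>X. leq y z}"
    by blast
  have "m \<in> maxS leq X"
  proof (unfold maxS_def, safe intro!: m(1))
    fix s' assume s': "s' \<in> X" "leq m s'"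
    show "s' = m"
    proof (rule ccontr)
      assume ne: "s' \<noteq> m"
      have xs: "leq x s'" using po_trans[OF P, of x m s'] m s' sub x by blast
      have "{z\<in>X. leq s' z} \<subset> {z\<in>X. leq m z}"
      proof
        show "{z\<in>X. leq s' z} \<subseteq> {z\<in>X. leq m z}"
          using po_trans[OF P, of m s'] m s' sub by blast
        have "m \<notin> {z\<in>X. leq s' z}" using po_antisym[OF P, of m s'] m s' sub ne by blast
        moreover have "m \<in> {z\<in>X. leq m z}" using po_refl[OF P, of m] m sub by blast
        ultimately show "{z\<in>X. leq s' z} \<noteq> {z\<in>X. leq m z}" by blast
      qed
      hence "card {z\<in>X. leq s' z} < card {z\<in>X. leq m z}"
        by (intro psubset_card_mono) (use fin in auto)
      with least[OF s'(1) xs] show False by simp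
    qed
  qed
  thus ?thesis using m by blast
qed

lemma ex_min:
  assumes P: "is_poset \<Omega> leq" and fin: "finite X" and sub: "X \<subseteq> \<Omega>" and x: "x \<in> X"
  shows "\<exists>m\<in>minS leq X. leq m x"
  using ex_max[OF poset_dual[OF P] fin sub x] unfolding maxS_def minS_def by blast

lemma ideal_gen_dclosed:
  assumes P: "is_poset \<Omega> leq" and T: "T \<subseteq> \<Omega>"
  shows "dclosed \<Omega> leq (ideal_gen \<Omega> leq T)"
proof -
  have "x \<in> ideal_gen \<Omega> leq T" if x: "x \<in> \<Omega>" and y: "y \<in> ideal_gen \<Omega> leq T" and xy: "leq x y" for x y
  proof -
    from y obtain b where b: "b \<in> T" "leq y b" "y \<in> \<Omega>" unfolding ideal_gen_def by blast
    have bO: "b \<in> \<Omega>" using b T by blast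
    have "leq x b" using po_trans[OF P x b(3) bO xy b(2)] by simp
    then show ?thesis using x b unfolding ideal_gen_def by blast
  qed
  then show ?thesis unfolding dclosed_def ideal_gen_def by blast
qed

lemma ideal_gen_eq_iff:
  assumes P: "is_poset \<Omega> leq" and fin: "finite \<Omega>" and I: "dclosed \<Omega> leq I" and T: "T \<subseteq> \<Omega>"
  shows "ideal_gen \<Omega> leq T = I \<longleftrightarrow> maxS leq I \<subseteq> T \<and> T \<subseteq> I"
proof
  assume eq: "ideal_gen \<Omega> leq T = I"
  have TI: "T \<subseteq> I" using eq T po_refl[OF P] unfolding ideal_gen_def by blast
  moreover have "maxS leq I \<subseteq> T"
  proof
    fix m assume m: "m \<in> maxS leq I"
    then have "m \<in> ideal_gen \<Omega> leq T" using eq unfolding maxS_def by blast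
    then obtain t where t: "t \<in> T" "leq m t" unfolding ideal_gen_def by blast
    then have "t = m" using m TI unfolding maxS_def by blast
    with t show "m \<in> T" by simp
  qed
  ultimately show "maxS leq I \<subseteq> T \<and> T \<subseteq> I" by blast
next
  assume h: "maxS leq I \<subseteq> T \<and> T \<subseteq> I"
  show "ideal_gen \<Omega> leq T = I"
  proof
    show "ideal_gen \<Omega> leq T \<subseteq> I" using h I unfolding ideal_gen_def dclosed_def by blast
    show "I \<subseteq> ideal_gen \<Omega> leq T"
    proof
      fix a assume a: "a \<in> I"
      have finI: "finite I" using I fin unfolding dclosed_def by (meson finite_subset)
      obtain m where "m \<in> maxS leq I" "leq a m"
        using ex_max[OF P finI _ a] I unfolding dclosed_def by blast
      then show "a \<in> ideal_gen \<Omega> leq T" using h a I unfolding ideal_gen_def dclosed_def by blast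
    qed
  qed
qed

definition Jset :: "'b set \<Rightarrow> ('b \<Rightarrow> 'b \<Rightarrow> bool) \<Rightarrow> 'b set \<Rightarrow> 'b set" where
  "Jset \<Omega> leq S = (\<Omega> - upS \<Omega> leq S) \<union> minS leq S"

lemma Jset_dclosed:
  assumes P: "is_poset \<Omega> leq" and S: "S \<subseteq> \<Omega>"
  shows "dclosed \<Omega> leq (Jset \<Omega> leq S)"
  unfolding dclosed_def
proof (intro conjI ballI impI)
  show "Jset \<Omega> leq S \<subseteq> \<Omega>" using S unfolding Jset_def minS_def by blast
next
  fix x y assume x: "x \<in> \<Omega>" and y: "y \<in> Jset \<Omega> leq S" and xy: "leq x y"
  have yO: "y \<in> \<Omega>" using y S unfolding Jset_def minS_def by blast
  show "x \<in> Jset \<Omega> leq S"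
  proof (cases "x \<in> upS \<Omega> leq S")
    case False then show ?thesis using x unfolding Jset_def by blast
  next
    case True
    then obtain s where s: "s \<in> S" "leq s x" unfolding upS_def by blast
    have sy: "leq s y" using po_trans[OF P, of s x y] s x yO xy S by blast
    then have "y \<in> upS \<Omega> leq S" using s yO unfolding upS_def by blast
    then have ym: "y \<in> minS leq S" using y unfolding Jset_def by blast
    then have "s = y" using s sy unfolding minS_def by blast
    then have "x = y" using po_antisym[OF P, of x y] s xy x yO by blast
    then show ?thesis using y by simp
  qed
qed

lemma Jset_good:
  assumes P: "is_poset \<Omega> leq" and S: "S \<subseteq> \<Omega>"
  shows "S \<inter> (Jset \<Omega> leq S - maxS leq (Jset \<Omega> leq S)) = {}"
proof -
  { fix s assume s: "s \<in> S" "s \<in> Jset \<Omega> leq S"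
    have sup: "s \<in> upS \<Omega> leq S" using s S po_refl[OF P] unfolding upS_def by blast
    hence smin: "s \<in> minS leq S" using s unfolding Jset_def by blast
    have "s \<in> maxS leq (Jset \<Omega> leq S)"
    proof (unfold maxS_def, safe intro!: s(2))
      fix j assume j: "j \<in> Jset \<Omega> leq S" "leq s j"
      have jO: "j \<in> \<Omega>" using j S unfolding Jset_def minS_def by blast
      have "j \<in> upS \<Omega> leq S" using s j jO unfolding upS_def by blast
      hence "j \<in> minS leq S" using j unfolding Jset_def by blast
      thus "j = s" using s j unfolding minS_def by blast
    qed }
  thus ?thesis by blast
qed

lemma Jset_card:
  assumes fin: "finite \<Omega>" and P: "is_poset \<Omega> leq" and S: "S \<subseteq> \<Omega>"
  shows "card (Jset \<Omega> leq S) = card \<Omega> - card (upS \<Omega> leq S) + card (minS leq S)"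
proof -
  have sub1: "minS leq S \<subseteq> upS \<Omega> leq S" using S po_refl[OF P] unfolding minS_def upS_def by blast
  have sub2: "upS \<Omega> leq S \<subseteq> \<Omega>" unfolding upS_def by blast
  have "card (Jset \<Omega> leq S) = card (\<Omega> - upS \<Omega> leq S) + card (minS leq S)"
  proof -
    have f1: "finite (minS leq S)" using S fin by (rule_tac finite_subset[of _ \<Omega>]) (auto simp: minS_def)
    have f2: "finite (\<Omega> - upS \<Omega> leq S)" using fin by simp
    show ?thesis unfolding Jset_def using sub1 by (intro card_Un_disjoint f1 f2) blast
  qed
  also have "card (\<Omega> - upS \<Omega> leq S) = card \<Omega> - card (upS \<Omega> leq S)"
    using sub2 fin by (simp add: card_Diff_subset finite_subset)
  finally show ?thesis .
qed

lemma good_sub_Jset: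
  assumes P: "is_poset \<Omega> leq" and S: "S \<subseteq> \<Omega>" and I: "dclosed \<Omega> leq I"
    and good: "S \<inter> (I - maxS leq I) = {}"
  shows "I \<subseteq> Jset \<Omega> leq S"
proof
  fix y assume y: "y \<in> I"
  have yO: "y \<in> \<Omega>" using y I unfolding dclosed_def by blast
  show "y \<in> Jset \<Omega> leq S"
  proof (cases "y \<in> upS \<Omega> leq S")
    case False thus ?thesis using yO unfolding Jset_def by blast
  next
    case True
    then obtain s where s: "s \<in> S" "leq s y" unfolding upS_def by blast
    have sI: "s \<in> I" using I s y S unfolding dclosed_def by blast
    hence "s \<in> maxS leq I" using good s by blast
    hence sy: "s = y" using s y unfolding maxS_def by blast
    have "y \<in> minS leq S"
    proof (unfold minS_def, safe)
      show "y \<in> S" using s sy by simp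
    next
      fix s' assume s': "s' \<in> S" "leq s' y"
      have "s' \<in> I" using I s' y S unfolding dclosed_def by blast
      hence "s' \<in> maxS leq I" using good s' by blast
      thus "s' = y" using s' y unfolding maxS_def by blast
    qed
    thus ?thesis unfolding Jset_def by blast
  qed
qed

lemma chains_finite:
  assumes fin: "finite \<Omega>" shows "finite {C. chain_top \<Omega> leq y C}"
  by (rule finite_subset[of _ "Pow \<Omega>"]) (use fin in \<open>auto simp: chain_top_def\<close>)

lemma chain_single:
  assumes P: "is_poset \<Omega> leq" and y: "y \<in> \<Omega>" shows "chain_top \<Omega> leq y {y}"
  using po_refl[OF P y] y unfolding chain_top_def by auto

lemma len_ge:
  assumes fin: "finite \<Omega>" and C: "chain_top \<Omega> leq y C"
  shows "card C \<le> len \<Omega> leq y"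
  unfolding len_def using C chains_finite[OF fin] by (intro Max_ge) auto

lemma len_obtain:
  assumes fin: "finite \<Omega>" and P: "is_poset \<Omega> leq" and y: "y \<in> \<Omega>"
  obtains C where "chain_top \<Omega> leq y C" "card C = len \<Omega> leq y"
proof -
  have "len \<Omega> leq y \<in> card ` {C. chain_top \<Omega> leq y C}"
    unfolding len_def using chains_finite[OF fin] chain_single[OF P y] by (intro Max_in) auto
  then obtain C where "C \<in> {C. chain_top \<Omega> leq y C}" "len \<Omega> leq y = card C" by blast
  then show ?thesis using that by simp
qed

lemma len_pos:
  assumes fin: "finite \<Omega>" and P: "is_poset \<Omega> leq" and y: "y \<in> \<Omega>"
  shows "1 \<le> len \<Omega> leq y"
  using len_ge[OF fin chain_single[OF P y]] by simp

lemma len_less: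
  assumes fin: "finite \<Omega>" and P: "is_poset \<Omega> leq" and x: "x \<in> \<Omega>" and y: "y \<in> \<Omega>"
    and xy: "leq x y" and ne: "x \<noteq> y"
  shows "len \<Omega> leq x < len \<Omega> leq y"
proof -
  obtain C where C: "chain_top \<Omega> leq x C" "card C = len \<Omega> leq x" using len_obtain[OF fin P x] .
  have CO: "C \<subseteq> \<Omega>" using C unfolding chain_top_def by blast
  have yC: "y \<notin> C"
  proof
    assume "y \<in> C"
    then have "leq y x" using C unfolding chain_top_def by blast
    then show False using po_antisym[OF P x y xy] ne by blast
  qed
  have "chain_top \<Omega> leq y (insert y C)"
    unfolding chain_top_def
  proof (intro conjI ballI)
    show "insert y C \<subseteq> \<Omega>" using CO y by blast
    show "y \<in> insert y C" by simp
  next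
    fix c assume c: "c \<in> insert y C"
    show "leq c y"
    proof (cases "c = y")
      case True then show ?thesis using po_refl[OF P y] by simp
    next
      case False
      then have "c \<in> C" using c by simp
      then have "leq c x" "c \<in> \<Omega>" using C CO unfolding chain_top_def by blast+
      then show ?thesis using po_trans[OF P _ x y _ xy] by blast
    qed
  next
    fix a b assume a: "a \<in> insert y C" and b: "b \<in> insert y C"
    have cy: "leq c y" if "c \<in> C" for c
    proof -
      have "leq c x" "c \<in> \<Omega>" using C CO that unfolding chain_top_def by blast+
      then show ?thesis using po_trans[OF P _ x y _ xy] by blast
    qed
    show "leq a b \<or> leq b a"
      using a b C cy po_refl[OF P y] unfolding chain_top_def by blast
  qed
  then have "card (insert y C) \<le> len \<Omega> leq y" by (rule len_ge[OF fin])
  moreover have "card (insert y C) = card C + 1"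
    using yC finite_subset[OF CO fin] by simp
  ultimately show ?thesis using C by simp
qed

definition Gset :: "'b set \<Rightarrow> ('b \<Rightarrow> 'b \<Rightarrow> bool) \<Rightarrow> nat \<Rightarrow> 'b set" where
  "Gset \<Omega> leq m = {x\<in>\<Omega>. m < len \<Omega> leq x}"

lemma hier_upS:
  assumes fin: "finite \<Omega>" and P: "is_poset \<Omega> leq" and H: "hierarchical \<Omega> leq"
    and S: "S \<subseteq> \<Omega>" and Sne: "S \<noteq> {}"
  defines "m \<equiv> Min (len \<Omega> leq ` S)"
  shows "upS \<Omega> leq S = minS leq S \<union> Gset \<Omega> leq m"
    and "minS leq S \<inter> Gset \<Omega> leq m = {}"
    and "minS leq S \<noteq> {}"
    and "upS \<Omega> leq S \<subseteq> {x\<in>\<Omega>. m \<le> len \<Omega> leq x}"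
proof -
  have finS: "finite S" using S fin finite_subset by blast
  have mle: "m \<le> len \<Omega> leq s" if "s \<in> S" for s
    unfolding m_def using finS that by (intro Min_le) auto
  have "m \<in> len \<Omega> leq ` S" unfolding m_def using finS Sne by (intro Min_in) auto
  then obtain s0 where s0: "s0 \<in> S" "len \<Omega> leq s0 = m" by auto
  have s0O: "s0 \<in> \<Omega>" using s0 S by blast
  have below: "leq s0 x" if "x \<in> \<Omega>" "m < len \<Omega> leq x" for x
    using H s0O that s0 unfolding hierarchical_def by force
  have minlen: "len \<Omega> leq s = m" if "s \<in> minS leq S" for s
  proof (rule ccontr)
    assume ne: "len \<Omega> leq s \<noteq> m"
    have sS: "s \<in> S" using that unfolding minS_def by blast
    then have "m < len \<Omega> leq s" using mle ne by force
    then have "leq s0 s" using below sS S by blast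
    then have "s0 = s" using that s0 unfolding minS_def by blast
    then show False using ne s0 by simp
  qed
  show "minS leq S \<inter> Gset \<Omega> leq m = {}" using minlen unfolding Gset_def by force
  have s0min: "s0 \<in> minS leq S"
  proof (unfold minS_def, safe intro!: s0(1))
    fix s' assume s': "s' \<in> S" "leq s' s0"
    show "s' = s0"
    proof (rule ccontr)
      assume "s' \<noteq> s0"
      then have "len \<Omega> leq s' < len \<Omega> leq s0" using len_less[OF fin P _ s0O s'(2)] s' S by blast
      then show False using mle[OF s'(1)] s0 by simp
    qed
  qed
  then show "minS leq S \<noteq> {}" by blast
  show "upS \<Omega> leq S \<subseteq> {x\<in>\<Omega>. m \<le> len \<Omega> leq x}"
  proof
    fix x assume "x \<in> upS \<Omega> leq S"
    then obtain s where s: "s \<in> S" "leq s x" "x \<in> \<Omega>" unfolding upS_def by blast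
    have "len \<Omega> leq s \<le> len \<Omega> leq x"
      using len_less[OF fin P _ s(3) s(2)] s S by (cases "s = x") force+
    then show "x \<in> {x\<in>\<Omega>. m \<le> len \<Omega> leq x}" using mle[OF s(1)] s by simp
  qed
  show "upS \<Omega> leq S = minS leq S \<union> Gset \<Omega> leq m"
  proof
    show "minS leq S \<union> Gset \<Omega> leq m \<subseteq> upS \<Omega> leq S"
    proof
      fix x assume x: "x \<in> minS leq S \<union> Gset \<Omega> leq m"
      show "x \<in> upS \<Omega> leq S"
      proof (cases "x \<in> Gset \<Omega> leq m")
        case True then show ?thesis using below s0 unfolding Gset_def upS_def by blast
      next
        case False
        then have "x \<in> S" using x unfolding minS_def by blast
        then show ?thesis using po_refl[OF P] S unfolding upS_def by blast
      qed
    qed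
  next
    show "upS \<Omega> leq S \<subseteq> minS leq S \<union> Gset \<Omega> leq m"
    proof
      fix x assume "x \<in> upS \<Omega> leq S"
      then obtain s where s: "s \<in> S" "leq s x" "x \<in> \<Omega>" unfolding upS_def by blast
      show "x \<in> minS leq S \<union> Gset \<Omega> leq m"
      proof (cases "m < len \<Omega> leq x")
        case True then show ?thesis using s unfolding Gset_def by blast
      next
        case False
        have sx: "s = x"
        proof (rule ccontr)
          assume "s \<noteq> x"
          then have "len \<Omega> leq s < len \<Omega> leq x" using len_less[OF fin P _ s(3) s(2)] s S by blast
          then show False using mle[OF s(1)] False by simp
        qed
        have lx: "len \<Omega> leq x = m" using False mle[OF s(1)] sx by simp
        have "x \<in> minS leq S"
        proof (unfold minS_def, safe)
          show "x \<in> S" using s sx by simp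
        next
          fix s' assume s': "s' \<in> S" "leq s' x"
          show "s' = x"
          proof (rule ccontr)
            assume "s' \<noteq> x"
            then have "len \<Omega> leq s' < len \<Omega> leq x" using len_less[OF fin P _ s(3) s'(2)] s' S by blast
            then show False using mle[OF s'(1)] lx by simp
          qed
        qed
        then show ?thesis by blast
      qed
    qed
  qed
qed

lemma hier_card_min:
  assumes fin: "finite \<Omega>" and P: "is_poset \<Omega> leq" and H: "hierarchical \<Omega> leq"
    and S: "S \<subseteq> \<Omega>" and S': "S' \<subseteq> \<Omega>"
    and eq: "card (upS \<Omega> leq S) = card (upS \<Omega> leq S')"
  shows "card (minS leq S) = card (minS leq S')"
proof -
  have up_ne: "upS \<Omega> leq T \<noteq> {}" if "T \<subseteq> \<Omega>" "T \<noteq> {}" for T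
    using that po_refl[OF P] unfolding upS_def by blast
  have fup: "finite (upS \<Omega> leq T)" for T using fin unfolding upS_def by simp
  have fmin: "finite (minS leq T)" if "T \<subseteq> \<Omega>" for T
    using that fin by (rule_tac finite_subset[of _ \<Omega>]) (auto simp: minS_def)
  have fG: "finite (Gset \<Omega> leq k)" for k using fin unfolding Gset_def by simp
  show ?thesis
  proof (cases "S = {} \<or> S' = {}")
    case True
    then show ?thesis
    proof
      assume "S = {}"
      then have "upS \<Omega> leq S = {}" unfolding upS_def by simp
      then have "S' = {}" using eq up_ne[OF S'] fup card_0_eq by metis
      then show ?thesis using \<open>S = {}\<close> unfolding minS_def by simp
    next
      assume "S' = {}"
      then have "upS \<Omega> leq S' = {}" unfolding upS_def by simp
      then have "S = {}" using eq up_ne[OF S] fup card_0_eq by metis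
      then show ?thesis using \<open>S' = {}\<close> unfolding minS_def by simp
    qed
  next
    case False
    then have ne: "S \<noteq> {}" "S' \<noteq> {}" by auto
    define m where "m = Min (len \<Omega> leq ` S)"
    define m' where "m' = Min (len \<Omega> leq ` S')"
    note h = hier_upS[OF fin P H S ne(1), folded m_def]
    note h' = hier_upS[OF fin P H S' ne(2), folded m'_def]
    have c: "card (upS \<Omega> leq S) = card (minS leq S) + card (Gset \<Omega> leq m)"
      using h(1,2) fmin[OF S] fG by (simp add: card_Un_disjoint)
    have c': "card (upS \<Omega> leq S') = card (minS leq S') + card (Gset \<Omega> leq m')"
      using h'(1,2) fmin[OF S'] fG by (simp add: card_Un_disjoint)
    have p: "0 < card (minS leq S)" "0 < card (minS leq S')"
      using h(3) h'(3) fmin S S' by (auto simp: card_gt_0_iff)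
    have key: "False" if lt: "k < k'" and hk: "upS \<Omega> leq T' \<subseteq> {x\<in>\<Omega>. k' \<le> len \<Omega> leq x}"
      and ck: "card (upS \<Omega> leq T) = card (minS leq T) + card (Gset \<Omega> leq k)"
      and pk: "0 < card (minS leq T)"
      and e: "card (upS \<Omega> leq T) = card (upS \<Omega> leq T')" for k k' T T'
    proof -
      have "upS \<Omega> leq T' \<subseteq> Gset \<Omega> leq k" using hk lt unfolding Gset_def by auto
      then have "card (upS \<Omega> leq T') \<le> card (Gset \<Omega> leq k)" using fG by (rule_tac card_mono) auto
      then show False using ck pk e by simp
    qed
    have "m = m'"
    proof (rule ccontr)
      assume "m \<noteq> m'"
      then consider "m < m'" | "m' < m" by linarith
      then show False
      proof cases
        case 1 then show False using key[OF 1 h'(4) c p(1) eq] by blast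
      next
        case 2 then show False using key[OF 2 h(4) c' p(2) eq[symmetric]] by blast
      qed
    qed
    then show ?thesis using c c' eq by simp
  qed
qed

definition su :: "'b set \<Rightarrow> ('b \<Rightarrow> 'b \<Rightarrow> bool) \<Rightarrow> 'b \<Rightarrow> 'b set" where
  "su \<Omega> leq x = {z\<in>\<Omega>. leq x z \<and> z \<noteq> x}"

definition Wprop :: "'b set \<Rightarrow> ('b \<Rightarrow> 'b \<Rightarrow> bool) \<Rightarrow> bool" where
  "Wprop \<Omega> leq \<longleftrightarrow> (\<exists>x\<in>\<Omega>. \<exists>y\<in>\<Omega>. \<not> leq x y \<and> su \<Omega> leq y \<subset> su \<Omega> leq x)"

lemma su_psub:
  assumes P: "is_poset \<Omega> leq" and x: "x \<in> \<Omega>" and z: "z \<in> \<Omega>" and xz: "leq x z" and ne: "x \<noteq> z"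
  shows "su \<Omega> leq z \<subset> su \<Omega> leq x"
proof
  show "su \<Omega> leq z \<subseteq> su \<Omega> leq x"
  proof
    fix w assume w: "w \<in> su \<Omega> leq z"
    then have wO: "w \<in> \<Omega>" and zw: "leq z w" and wz: "w \<noteq> z" unfolding su_def by auto
    have xw: "leq x w" using po_trans[OF P x z wO xz zw] .
    have "w \<noteq> x"
    proof
      assume "w = x"
      then have "z = x" using po_antisym[OF P z x] zw xz by simp
      then show False using ne by simp
    qed
    then show "w \<in> su \<Omega> leq x" using wO xw unfolding su_def by simp
  qed
  have "z \<in> su \<Omega> leq x" "z \<notin> su \<Omega> leq z" using z xz ne unfolding su_def by auto
  then show "su \<Omega> leq z \<noteq> su \<Omega> leq x" by blast
qed

lemma notW_chain:
  assumes fin: "finite \<Omega>" and P: "is_poset \<Omega> leq" and nW: "\<not> Wprop \<Omega> leq"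
  shows "x \<in> \<Omega> \<Longrightarrow> y \<in> \<Omega> \<Longrightarrow> su \<Omega> leq x \<subseteq> su \<Omega> leq y \<or> su \<Omega> leq y \<subseteq> su \<Omega> leq x"
proof (induction "card (su \<Omega> leq x) + card (su \<Omega> leq y)" arbitrary: x y rule: less_induct)
  case less
  have fsu: "finite (su \<Omega> leq w)" for w using fin unfolding su_def by simp
  show ?case
  proof (rule ccontr)
    assume inc: "\<not> (su \<Omega> leq x \<subseteq> su \<Omega> leq y \<or> su \<Omega> leq y \<subseteq> su \<Omega> leq x)"
    then obtain z where z: "z \<in> su \<Omega> leq x" "z \<notin> su \<Omega> leq y" by blast
    have zO: "z \<in> \<Omega>" and xz: "leq x z" and zx: "z \<noteq> x" using z unfolding su_def by auto
    have ps: "su \<Omega> leq z \<subset> su \<Omega> leq x" using su_psub[OF P less(2) zO xz] zx by simp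
    then have "card (su \<Omega> leq z) < card (su \<Omega> leq x)" using fsu by (simp add: psubset_card_mono)
    then have "su \<Omega> leq z \<subseteq> su \<Omega> leq y \<or> su \<Omega> leq y \<subseteq> su \<Omega> leq z"
      using less(1)[of z y] zO less(3) by simp
    then show False
    proof
      assume zy: "su \<Omega> leq z \<subseteq> su \<Omega> leq y"
      show False
      proof (cases "su \<Omega> leq z = su \<Omega> leq y")
        case True then show False using ps inc by blast
      next
        case False
        then have "su \<Omega> leq z \<subset> su \<Omega> leq y" using zy by blast
        then have "leq y z" using nW less(3) zO unfolding Wprop_def by blast
        moreover have "z \<noteq> y"
        proof
          assume "z = y"
          then have "su \<Omega> leq y \<subset> su \<Omega> leq x" using ps by simp
          then show False using inc by blast
        qed
        ultimately show False using z(2) zO unfolding su_def by blast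
      qed
    next
      assume "su \<Omega> leq y \<subseteq> su \<Omega> leq z"
      then show False using ps inc by blast
    qed
  qed
qed

lemma notW_hier:
  assumes fin: "finite \<Omega>" and P: "is_poset \<Omega> leq" and nW: "\<not> Wprop \<Omega> leq"
  shows "hierarchical \<Omega> leq"
  unfolding hierarchical_def
proof (intro ballI impI)
  fix u v assume u: "u \<in> \<Omega>" and v: "v \<in> \<Omega>" and lt: "len \<Omega> leq u + 1 \<le> len \<Omega> leq v"
  show "leq u v"
  proof (rule ccontr)
    assume nuv: "\<not> leq u v"
    obtain C where C: "chain_top \<Omega> leq v C" "card C = len \<Omega> leq v" using len_obtain[OF fin P v] .
    have CO: "C \<subseteq> \<Omega>" and vC: "v \<in> C" and Cle: "\<And>c. c \<in> C \<Longrightarrow> leq c v"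
      and Ccmp: "\<And>a b. a \<in> C \<Longrightarrow> b \<in> C \<Longrightarrow> leq a b \<or> leq b a"
      using C unfolding chain_top_def by auto
    have "su \<Omega> leq u \<subseteq> su \<Omega> leq v"
    proof -
      have "su \<Omega> leq u \<subseteq> su \<Omega> leq v \<or> su \<Omega> leq v \<subseteq> su \<Omega> leq u"
        using notW_chain[OF fin P nW u v] .
      moreover have "\<not> su \<Omega> leq v \<subset> su \<Omega> leq u" using nW u v nuv unfolding Wprop_def by blast
      ultimately show ?thesis by blast
    qed
    then have cu: "leq c u" if c: "c \<in> C - {v}" for c
    proof -
      have "su \<Omega> leq v \<subset> su \<Omega> leq c" using su_psub[OF P _ v] c CO Cle by blast
      then have "su \<Omega> leq u \<subset> su \<Omega> leq c" using \<open>su \<Omega> leq u \<subseteq> su \<Omega> leq v\<close> by blast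
      then show ?thesis using nW u c CO unfolding Wprop_def by blast
    qed
    have uC: "u \<notin> C" using nuv Cle by blast
    have "chain_top \<Omega> leq u (insert u (C - {v}))"
      unfolding chain_top_def
    proof (intro conjI ballI)
      show "insert u (C - {v}) \<subseteq> \<Omega>" using CO u by blast
      show "u \<in> insert u (C - {v})" by simp
    next
      fix c assume "c \<in> insert u (C - {v})"
      then show "leq c u" using cu po_refl[OF P u] by blast
    next
      fix a b assume "a \<in> insert u (C - {v})" "b \<in> insert u (C - {v})"
      then show "leq a b \<or> leq b a" using cu Ccmp po_refl[OF P u] by blast
    qed
    then have "card (insert u (C - {v})) \<le> len \<Omega> leq u" by (rule len_ge[OF fin])
    moreover have "card (insert u (C - {v})) = card C"
    proof -
      have fC: "finite C" using CO fin finite_subset by blast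
      have "card (insert u (C - {v})) = card (C - {v}) + 1" using uC fC by simp
      also have "\<dots> = card C" using vC fC card_Diff1_le
        by (metis One_nat_def Suc_pred card_Diff_singleton card_gt_0_iff empty_iff add.commute plus_1_eq_Suc)
      finally show ?thesis .
    qed
    ultimately show False using C lt by simp
  qed
qed

lemma W_witness:
  assumes fin: "finite \<Omega>" and P: "is_poset \<Omega> leq" and W: "Wprop \<Omega> leq"
  shows "\<exists>S S'. S \<subseteq> \<Omega> \<and> S' \<subseteq> \<Omega> \<and> card (upS \<Omega> leq S) = card (upS \<Omega> leq S')
     \<and> card (minS leq S) \<noteq> card (minS leq S')"
proof -
  obtain x y where x: "x \<in> \<Omega>" and y: "y \<in> \<Omega>" and nxy: "\<not> leq x y"
    and ps: "su \<Omega> leq y \<subset> su \<Omega> leq x" using W unfolding Wprop_def by blast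
  define S' where "S' = insert y (su \<Omega> leq x)"
  have S'O: "S' \<subseteq> \<Omega>" using y unfolding S'_def su_def by blast
  have fsu: "finite (su \<Omega> leq x)" using fin unfolding su_def by simp
  have ysu: "y \<notin> su \<Omega> leq x" using nxy unfolding su_def by blast
  have up1: "upS \<Omega> leq {x} = insert x (su \<Omega> leq x)"
    using x po_refl[OF P x] unfolding upS_def su_def by auto
  have up2: "upS \<Omega> leq S' = S'"
  proof
    show "S' \<subseteq> upS \<Omega> leq S'" using S'O po_refl[OF P] unfolding upS_def by blast
    show "upS \<Omega> leq S' \<subseteq> S'"
    proof
      fix a assume "a \<in> upS \<Omega> leq S'"
      then obtain b where b: "b \<in> S'" "leq b a" "a \<in> \<Omega>" unfolding upS_def by blast
      show "a \<in> S'"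
      proof (cases "b = y")
        case True
        then show ?thesis
        proof (cases "a = y")
          case False
          then have "a \<in> su \<Omega> leq y" using b True unfolding su_def by blast
          then show ?thesis using ps unfolding S'_def by blast
        qed (simp add: S'_def)
      next
        case False
        then have bs: "b \<in> su \<Omega> leq x" using b unfolding S'_def by blast
        then have bO: "b \<in> \<Omega>" and xb: "leq x b" and bx: "b \<noteq> x" unfolding su_def by auto
        have xa: "leq x a" using po_trans[OF P x bO b(3) xb b(2)] .
        have "a \<noteq> x" using po_antisym[OF P x bO xb] b bx by blast
        then show ?thesis using xa b(3) unfolding S'_def su_def by blast
      qed
    qed
  qed
  have cu: "card (upS \<Omega> leq {x}) = card (upS \<Omega> leq S')"
  proof -
    have "card S' = Suc (card (su \<Omega> leq x))" unfolding S'_def using fsu ysu by simp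
    moreover have "card (insert x (su \<Omega> leq x)) = Suc (card (su \<Omega> leq x))"
      using fsu by (simp add: su_def)
    ultimately show ?thesis unfolding up1 up2 by simp
  qed
  have m1: "minS leq {x} = {x}" unfolding minS_def by auto
  have fS': "finite S'" using S'O fin finite_subset by blast
  have ymin: "y \<in> minS leq S'"
  proof (unfold minS_def, safe)
    show "y \<in> S'" unfolding S'_def by simp
  next
    fix s' assume s': "s' \<in> S'" "leq s' y"
    show "s' = y"
    proof (rule ccontr)
      assume "s' \<noteq> y"
      then have "s' \<in> su \<Omega> leq x" using s' unfolding S'_def by blast
      then have "leq x s'" "s' \<in> \<Omega>" unfolding su_def by auto
      then have "leq x y" using po_trans[OF P x _ y] s'(2) by blast
      then show False using nxy by simp
    qed
  qed
  obtain z where z: "z \<in> su \<Omega> leq x" "z \<notin> su \<Omega> leq y" using ps by blast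
  have zS: "z \<in> S'" using z unfolding S'_def by blast
  obtain m where m: "m \<in> minS leq S'" "leq m z" using ex_min[OF P fS' S'O zS] by blast
  have my: "m \<noteq> y"
  proof
    assume "m = y"
    then have "leq y z" using m by simp
    moreover have "z \<noteq> y" using z ysu by blast
    ultimately have "z \<in> su \<Omega> leq y" using z unfolding su_def by blast
    then show False using z by simp
  qed
  have "{y, m} \<subseteq> minS leq S'" using ymin m by blast
  moreover have "finite (minS leq S')" using fS' by (rule finite_subset[rotated]) (auto simp: minS_def)
  ultimately have "card {y, m} \<le> card (minS leq S')" by (rule card_mono[rotated])
  then have "2 \<le> card (minS leq S')" using my by simp
  then have "card (minS leq {x}) \<noteq> card (minS leq S')" unfolding m1 by simp
  then show ?thesis using cu x S'O by (intro exI[of _ "{x}"] exI[of _ S']) auto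
qed

lemma char_one:
  assumes G: "group G" and chi: "character G \<chi>"
  shows "\<chi> \<one>\<^bsub>G\<^esub> = 1"
proof -
  interpret group G by (rule G)
  have o: "\<one>\<^bsub>G\<^esub> \<in> carrier G" by simp
  have "\<chi> (\<one>\<^bsub>G\<^esub> \<otimes>\<^bsub>G\<^esub> \<one>\<^bsub>G\<^esub>) = \<chi> \<one>\<^bsub>G\<^esub> * \<chi> \<one>\<^bsub>G\<^esub>"
    using chi o unfolding character_def by blast
  moreover have "\<one>\<^bsub>G\<^esub> \<otimes>\<^bsub>G\<^esub> \<one>\<^bsub>G\<^esub> = \<one>\<^bsub>G\<^esub>" by simp
  moreover have "\<chi> \<one>\<^bsub>G\<^esub> \<noteq> 0" using chi o unfolding character_def by blast
  ultimately show ?thesis by (metis mult_cancel_left1)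
qed

lemma char_sum:
  assumes G: "group G" and fin: "finite (carrier G)" and chi: "character G \<chi>"
  shows "(\<Sum>h\<in>carrier G. \<chi> h) = (if trivial_character G \<chi> then of_nat (card (carrier G)) else 0)"
proof (cases "trivial_character G \<chi>")
  case True
  then have "(\<Sum>h\<in>carrier G. \<chi> h) = (\<Sum>h\<in>carrier G. 1)"
    unfolding trivial_character_def by (intro sum.cong) auto
  then show ?thesis using True by simp
next
  case False
  interpret group G by (rule G)
  obtain g where g: "g \<in> carrier G" "\<chi> g \<noteq> 1" using False unfolding trivial_character_def by blast
  have "(\<Sum>h\<in>carrier G. \<chi> h) = (\<Sum>h\<in>(\<lambda>x. g \<otimes>\<^bsub>G\<^esub> x) ` carrier G. \<chi> h)"
    using surj_const_mult[OF g(1)] by simp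
  also have "\<dots> = (\<Sum>h\<in>carrier G. \<chi> (g \<otimes>\<^bsub>G\<^esub> h))"
    by (rule sum.reindex_cong[OF inj_on_cmult[OF g(1)] refl]) simp
  also have "\<dots> = (\<Sum>h\<in>carrier G. \<chi> g * \<chi> h)"
    using chi g(1) unfolding character_def by (intro sum.cong) auto
  also have "\<dots> = \<chi> g * (\<Sum>h\<in>carrier G. \<chi> h)" by (rule sum_distrib_left[symmetric])
  finally have e: "(\<Sum>h\<in>carrier G. \<chi> h) = \<chi> g * (\<Sum>h\<in>carrier G. \<chi> h)" .
  have "(1 - \<chi> g) * (\<Sum>h\<in>carrier G. \<chi> h) = 0"
    using e by (simp add: left_diff_distrib)
  then have "(\<Sum>h\<in>carrier G. \<chi> h) = 0" using g(2) by simp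
  then show ?thesis using False by simp
qed

lemma char_sum_nonone:
  assumes G: "group G" and fin: "finite (carrier G)" and chi: "character G \<chi>"
  shows "(\<Sum>h\<in>carrier G - {\<one>\<^bsub>G\<^esub>}. \<chi> h) =
     (if trivial_character G \<chi> then of_nat (card (carrier G)) - 1 else - 1)"
proof -
  interpret group G by (rule G)
  have o: "\<one>\<^bsub>G\<^esub> \<in> carrier G" by simp
  have "(\<Sum>h\<in>carrier G - {\<one>\<^bsub>G\<^esub>}. \<chi> h) = (\<Sum>h\<in>carrier G. \<chi> h) - \<chi> \<one>\<^bsub>G\<^esub>"
    using fin o by (simp add: sum_diff1)
  then show ?thesis using char_sum[OF G fin chi] char_one[OF G chi] by simp
qed

definition evals :: "('b \<Rightarrow> ('a, 'c) monoid_scheme) \<Rightarrow> ('b \<Rightarrow> 'a \<Rightarrow> complex) \<Rightarrow> 'b \<Rightarrow> complex" where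
  "evals G \<alpha> i = (\<Sum>h\<in>carrier (G i) - {\<one>\<^bsub>G i\<^esub>}. \<alpha> i h)"

lemma supp_sum:
  assumes fin: "finite \<Omega>" and grp: "\<And>i. i \<in> \<Omega> \<Longrightarrow> group (G i)"
    and fcar: "\<And>i. i \<in> \<Omega> \<Longrightarrow> finite (carrier (G i))"
    and chars: "char_family \<Omega> G \<alpha>" and T: "T \<subseteq> \<Omega>"
  shows "(\<Sum>\<beta>\<in>{\<beta>\<in>codewords \<Omega> G. cw_supp \<Omega> G \<beta> = T}. char_eval \<Omega> \<alpha> \<beta>) = (\<Prod>i\<in>T. evals G \<alpha> i)"
proof -
  define A where "A i = (if i \<in> T then carrier (G i) - {\<one>\<^bsub>G i\<^esub>} else {\<one>\<^bsub>G i\<^esub>})" for i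
  have one: "\<one>\<^bsub>G i\<^esub> \<in> carrier (G i)" if "i \<in> \<Omega>" for i
    using grp[OF that] by (simp add: group.is_monoid monoid.one_closed)
  have seteq: "{\<beta>\<in>codewords \<Omega> G. cw_supp \<Omega> G \<beta> = T} = PiE \<Omega> A"
  proof (intro equalityI subsetI)
    fix \<beta> assume "\<beta> \<in> {\<beta>\<in>codewords \<Omega> G. cw_supp \<Omega> G \<beta> = T}"
    then have b: "\<beta> \<in> PiE \<Omega> (\<lambda>i. carrier (G i))" and s: "{i\<in>\<Omega>. \<beta> i \<noteq> \<one>\<^bsub>G i\<^esub>} = T"
      unfolding codewords_def cw_supp_def by auto
    show "\<beta> \<in> PiE \<Omega> A" unfolding PiE_iff
    proof (intro conjI ballI)
      fix i assume i: "i \<in> \<Omega>"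
      show "\<beta> i \<in> A i" using b i s unfolding A_def PiE_iff by auto
    next
      show "\<beta> \<in> extensional \<Omega>" using b unfolding PiE_iff by simp
    qed
  next
    fix \<beta> assume b: "\<beta> \<in> PiE \<Omega> A"
    have "\<beta> \<in> codewords \<Omega> G" unfolding codewords_def PiE_iff
    proof (intro conjI ballI)
      fix i assume i: "i \<in> \<Omega>"
      show "\<beta> i \<in> carrier (G i)" using b i one[OF i] unfolding PiE_iff A_def by (auto split: if_splits)
    next
      show "\<beta> \<in> extensional \<Omega>" using b unfolding PiE_iff by simp
    qed
    moreover have "cw_supp \<Omega> G \<beta> = T"
      using b T unfolding cw_supp_def PiE_iff A_def by (auto split: if_splits)
    ultimately show "\<beta> \<in> {\<beta>\<in>codewords \<Omega> G. cw_supp \<Omega> G \<beta> = T}" by simp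
  qed
  have fA: "finite (A i)" if "i \<in> \<Omega>" for i using fcar[OF that] unfolding A_def by auto
  have "(\<Sum>\<beta>\<in>{\<beta>\<in>codewords \<Omega> G. cw_supp \<Omega> G \<beta> = T}. char_eval \<Omega> \<alpha> \<beta>)
      = (\<Sum>\<beta>\<in>PiE \<Omega> A. \<Prod>i\<in>\<Omega>. \<alpha> i (\<beta> i))" unfolding seteq char_eval_def ..
  also have "\<dots> = (\<Prod>i\<in>\<Omega>. \<Sum>a\<in>A i. \<alpha> i a)"
    by (rule prod_sum_PiE[symmetric]) (use fin fA in auto)
  also have "\<dots> = (\<Prod>i\<in>\<Omega>. if i \<in> T then evals G \<alpha> i else 1)"
  proof (rule prod.cong[OF refl])
    fix i assume i: "i \<in> \<Omega>"
    have "character (G i) (\<alpha> i)" using chars i unfolding char_family_def by blast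
    then have "\<alpha> i \<one>\<^bsub>G i\<^esub> = 1" using char_one grp[OF i] by blast
    then show "(\<Sum>a\<in>A i. \<alpha> i a) = (if i \<in> T then evals G \<alpha> i else 1)"
      unfolding A_def evals_def by simp
  qed
  also have "\<dots> = (\<Prod>i\<in>\<Omega> \<inter> T. evals G \<alpha> i)" by (rule prod.inter_restrict[OF fin, symmetric])
  also have "\<Omega> \<inter> T = T" using T by blast
  finally show ?thesis .
qed

lemma coeff_F:
  assumes fin: "finite \<Omega>"
  shows "coeff (F_poly \<Omega> G leq \<alpha>) l =
    (\<Sum>\<beta>\<in>{\<beta>\<in>codewords \<Omega> G. wt \<Omega> leq (cw_supp \<Omega> G \<beta>) = l}. char_eval \<Omega> \<alpha> \<beta>)"
proof -
  have "coeff (F_poly \<Omega> G leq \<alpha>) l = (\<Sum>l'\<in>{0..card \<Omega>}. if l' = l then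
      (\<Sum>\<beta>\<in>{\<beta>\<in>codewords \<Omega> G. wt \<Omega> leq (cw_supp \<Omega> G \<beta>) = l'}. char_eval \<Omega> \<alpha> \<beta>) else 0)"
    unfolding F_poly_def coeff_sum coeff_monom ..
  also have "\<dots> = (if l \<in> {0..card \<Omega>} then
      (\<Sum>\<beta>\<in>{\<beta>\<in>codewords \<Omega> G. wt \<Omega> leq (cw_supp \<Omega> G \<beta>) = l}. char_eval \<Omega> \<alpha> \<beta>) else 0)"
    by (rule sum.delta) simp
  also have "\<dots> = (\<Sum>\<beta>\<in>{\<beta>\<in>codewords \<Omega> G. wt \<Omega> leq (cw_supp \<Omega> G \<beta>) = l}. char_eval \<Omega> \<alpha> \<beta>)"
  proof (cases "l \<in> {0..card \<Omega>}")
    case False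
    have "wt \<Omega> leq X \<le> card \<Omega>" for X
      unfolding wt_def ideal_gen_def using fin by (intro card_mono) auto
    then have e: "{\<beta>\<in>codewords \<Omega> G. wt \<Omega> leq (cw_supp \<Omega> G \<beta>) = l} = {}" using False by force
    have "(\<Sum>\<beta>\<in>{\<beta>\<in>codewords \<Omega> G. wt \<Omega> leq (cw_supp \<Omega> G \<beta>) = l}. char_eval \<Omega> \<alpha> \<beta>) = 0"
      by (simp only: e sum.empty)
    then show ?thesis using False by simp
  qed simp
  finally show ?thesis .
qed

lemma coeff_F_T:
  assumes fin: "finite \<Omega>" and grp: "\<And>i. i \<in> \<Omega> \<Longrightarrow> group (G i)"
    and fcar: "\<And>i. i \<in> \<Omega> \<Longrightarrow> finite (carrier (G i))"
    and chars: "char_family \<Omega> G \<alpha>"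
  shows "coeff (F_poly \<Omega> G leq \<alpha>) l =
    (\<Sum>T\<in>{T\<in>Pow \<Omega>. wt \<Omega> leq T = l}. \<Prod>i\<in>T. evals G \<alpha> i)"
proof -
  let ?B = "{\<beta>\<in>codewords \<Omega> G. wt \<Omega> leq (cw_supp \<Omega> G \<beta>) = l}"
  have fcw: "finite (codewords \<Omega> G)" unfolding codewords_def using fin fcar by (intro finite_PiE) auto
  have "(\<Sum>\<beta>\<in>?B. char_eval \<Omega> \<alpha> \<beta>) =
      (\<Sum>T\<in>{T\<in>Pow \<Omega>. wt \<Omega> leq T = l}. \<Sum>\<beta>\<in>{x. x \<in> ?B \<and> cw_supp \<Omega> G x = T}. char_eval \<Omega> \<alpha> \<beta>)"
    by (rule sum.group[symmetric]) (use fcw fin in \<open>auto simp: cw_supp_def\<close>)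
  also have "\<dots> = (\<Sum>T\<in>{T\<in>Pow \<Omega>. wt \<Omega> leq T = l}. \<Prod>i\<in>T. evals G \<alpha> i)"
  proof (rule sum.cong[OF refl])
    fix T assume T: "T \<in> {T\<in>Pow \<Omega>. wt \<Omega> leq T = l}"
    then have "{x. x \<in> ?B \<and> cw_supp \<Omega> G x = T} = {\<beta>\<in>codewords \<Omega> G. cw_supp \<Omega> G \<beta> = T}" by auto
    then show "(\<Sum>\<beta>\<in>{x. x \<in> ?B \<and> cw_supp \<Omega> G x = T}. char_eval \<Omega> \<alpha> \<beta>) = (\<Prod>i\<in>T. evals G \<alpha> i)"
      using supp_sum[OF fin grp fcar chars] T by auto
  qed
  finally show ?thesis by (subst coeff_F[OF fin])
qed

lemma sum_over_ideals:
  assumes fin: "finite \<Omega>" and P: "is_poset \<Omega> leq"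
  shows "(\<Sum>T\<in>{T\<in>Pow \<Omega>. wt \<Omega> leq T = l}. w T) =
    (\<Sum>I\<in>{I\<in>Pow \<Omega>. dclosed \<Omega> leq I \<and> card I = l}. \<Sum>T\<in>{T\<in>Pow \<Omega>. ideal_gen \<Omega> leq T = I}. w T)"
proof -
  have "(\<Sum>T\<in>{T\<in>Pow \<Omega>. wt \<Omega> leq T = l}. w T) =
    (\<Sum>I\<in>{I\<in>Pow \<Omega>. dclosed \<Omega> leq I \<and> card I = l}.
       \<Sum>T\<in>{x. x \<in> {T\<in>Pow \<Omega>. wt \<Omega> leq T = l} \<and> ideal_gen \<Omega> leq x = I}. w T)"
  proof (rule sum.group[symmetric])
    show "finite {T\<in>Pow \<Omega>. wt \<Omega> leq T = l}" using fin by simp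
    show "finite {I\<in>Pow \<Omega>. dclosed \<Omega> leq I \<and> card I = l}" using fin by simp
    show "ideal_gen \<Omega> leq ` {T\<in>Pow \<Omega>. wt \<Omega> leq T = l} \<subseteq> {I\<in>Pow \<Omega>. dclosed \<Omega> leq I \<and> card I = l}"
    proof
      fix I assume "I \<in> ideal_gen \<Omega> leq ` {T\<in>Pow \<Omega>. wt \<Omega> leq T = l}"
      then obtain T where T: "T \<subseteq> \<Omega>" "wt \<Omega> leq T = l" "I = ideal_gen \<Omega> leq T" by auto
      have "dclosed \<Omega> leq I" using ideal_gen_dclosed[OF P T(1)] T(3) by simp
      moreover have "I \<subseteq> \<Omega>" using T(3) unfolding ideal_gen_def by blast
      ultimately show "I \<in> {I\<in>Pow \<Omega>. dclosed \<Omega> leq I \<and> card I = l}" using T unfolding wt_def by blast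
    qed
  qed
  also have "\<dots> = (\<Sum>I\<in>{I\<in>Pow \<Omega>. dclosed \<Omega> leq I \<and> card I = l}. \<Sum>T\<in>{T\<in>Pow \<Omega>. ideal_gen \<Omega> leq T = I}. w T)"
    by (intro sum.cong refl arg_cong2[where f = sum]) (auto simp: wt_def)
  finally show ?thesis .
qed

lemma sum_pow_prod:
  assumes "finite A"
  shows "(\<Sum>R\<in>Pow A. \<Prod>i\<in>R. (e i :: complex)) = (\<Prod>i\<in>A. 1 + e i)"
  using prod_add[OF assms, of e "\<lambda>_. 1"] by (simp add: add.commute)

lemma ideal_sum:
  assumes fin: "finite \<Omega>" and P: "is_poset \<Omega> leq" and I: "dclosed \<Omega> leq I"
  shows "(\<Sum>T\<in>{T\<in>Pow \<Omega>. ideal_gen \<Omega> leq T = I}. \<Prod>i\<in>T. (e i :: complex)) =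
     (\<Prod>i\<in>maxS leq I. e i) * (\<Prod>i\<in>I - maxS leq I. 1 + e i)"
proof -
  let ?M = "maxS leq I"
  have IO: "I \<subseteq> \<Omega>" using I unfolding dclosed_def by blast
  have fI: "finite I" using IO fin finite_subset by blast
  have MI: "?M \<subseteq> I" unfolding maxS_def by blast
  have fM: "finite ?M" using MI fI finite_subset by blast
  have seteq: "{T\<in>Pow \<Omega>. ideal_gen \<Omega> leq T = I} = (\<lambda>R. ?M \<union> R) ` Pow (I - ?M)"
  proof (intro equalityI subsetI)
    fix T assume "T \<in> {T\<in>Pow \<Omega>. ideal_gen \<Omega> leq T = I}"
    then have T: "T \<subseteq> \<Omega>" "ideal_gen \<Omega> leq T = I" by auto
    then have "?M \<subseteq> T" "T \<subseteq> I" using ideal_gen_eq_iff[OF P fin I T(1)] by auto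
    then have "T = ?M \<union> (T - ?M)" "T - ?M \<in> Pow (I - ?M)" by auto
    then show "T \<in> (\<lambda>R. ?M \<union> R) ` Pow (I - ?M)" by blast
  next
    fix T assume "T \<in> (\<lambda>R. ?M \<union> R) ` Pow (I - ?M)"
    then obtain R where R: "R \<subseteq> I - ?M" "T = ?M \<union> R" by blast
    then have TO: "T \<subseteq> \<Omega>" using MI IO by blast
    have "?M \<subseteq> T \<and> T \<subseteq> I" using R MI by blast
    then have "ideal_gen \<Omega> leq T = I" using ideal_gen_eq_iff[OF P fin I TO] by blast
    then show "T \<in> {T\<in>Pow \<Omega>. ideal_gen \<Omega> leq T = I}" using TO by blast
  qed
  have inj: "inj_on (\<lambda>R. ?M \<union> R) (Pow (I - ?M))"
    by (rule inj_onI) blast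
  have "(\<Sum>T\<in>{T\<in>Pow \<Omega>. ideal_gen \<Omega> leq T = I}. \<Prod>i\<in>T. e i) =
      (\<Sum>R\<in>Pow (I - ?M). \<Prod>i\<in>?M \<union> R. e i)"
    unfolding seteq by (simp add: sum.reindex[OF inj])
  also have "\<dots> = (\<Sum>R\<in>Pow (I - ?M). (\<Prod>i\<in>?M. e i) * (\<Prod>i\<in>R. e i))"
  proof (rule sum.cong[OF refl])
    fix R assume R: "R \<in> Pow (I - ?M)"
    then have "finite R" using fI finite_subset by blast
    then show "(\<Prod>i\<in>?M \<union> R. e i) = (\<Prod>i\<in>?M. e i) * (\<Prod>i\<in>R. e i)"
      using R fM by (intro prod.union_disjoint) auto
  qed
  also have "\<dots> = (\<Prod>i\<in>?M. e i) * (\<Sum>R\<in>Pow (I - ?M). \<Prod>i\<in>R. e i)"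
    by (simp add: sum_distrib_left)
  also have "\<dots> = (\<Prod>i\<in>?M. e i) * (\<Prod>i\<in>I - ?M. 1 + e i)"
    using sum_pow_prod[of "I - ?M" e] fI by simp
  finally show ?thesis .
qed

lemma degree_F:
  assumes fin: "finite \<Omega>" and grp: "\<And>i. i \<in> \<Omega> \<Longrightarrow> group (G i)"
    and fcar: "\<And>i. i \<in> \<Omega> \<Longrightarrow> finite (carrier (G i))"
    and card2: "\<And>i. i \<in> \<Omega> \<Longrightarrow> card (carrier (G i)) \<ge> 2"
    and P: "is_poset \<Omega> leq" and chars: "char_family \<Omega> G \<alpha>"
  shows "degree (F_poly \<Omega> G leq \<alpha>) =
    card \<Omega> - card (upS \<Omega> leq (char_supp \<Omega> G \<alpha>)) + card (minS leq (char_supp \<Omega> G \<alpha>))"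
proof -
  define S where "S = char_supp \<Omega> G \<alpha>"
  define e where "e = evals G \<alpha>"
  define K where "K = card \<Omega> - card (upS \<Omega> leq S) + card (minS leq S)"
  define J where "J = Jset \<Omega> leq S"
  define g where "g I = (\<Prod>i\<in>maxS leq I. e i) * (\<Prod>i\<in>I - maxS leq I. 1 + e i)" for I
  have SO: "S \<subseteq> \<Omega>" unfolding S_def char_supp_def by blast
  have ev: "e i = (if i \<in> S then - 1 else of_nat (card (carrier (G i))) - 1)" if i: "i \<in> \<Omega>" for i
  proof -
    have "character (G i) (\<alpha> i)" using chars i unfolding char_family_def by blast
    then show ?thesis using char_sum_nonone[OF grp[OF i] fcar[OF i]] i
      unfolding e_def evals_def S_def char_supp_def by simp
  qed
  have ne0: "e i \<noteq> 0" if i: "i \<in> \<Omega>" for i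
  proof -
    have "of_nat (card (carrier (G i))) \<noteq> (1::complex)" using card2[OF i]
      by (metis of_nat_1 of_nat_eq_iff numeral_le_one_iff semiring_norm(69))
    then show ?thesis using ev[OF i] by auto
  qed
  have one_e: "1 + e i = 0 \<longleftrightarrow> i \<in> S" if i: "i \<in> \<Omega>" for i
  proof -
    have "of_nat (card (carrier (G i))) \<noteq> (0::complex)" using card2[OF i] by simp
    then show ?thesis using ev[OF i] by auto
  qed
  have gnz: "g I \<noteq> 0 \<longleftrightarrow> S \<inter> (I - maxS leq I) = {}" if I: "dclosed \<Omega> leq I" for I
  proof -
    have IO: "I \<subseteq> \<Omega>" using I unfolding dclosed_def by blast
    have fI: "finite I" using IO fin finite_subset by blast
    have fM: "finite (maxS leq I)" using fI by (rule finite_subset[rotated]) (auto simp: maxS_def)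
    have MO: "maxS leq I \<subseteq> \<Omega>" using IO unfolding maxS_def by blast
    have "(\<Prod>i\<in>maxS leq I. e i) \<noteq> 0" using fM ne0 MO by auto
    moreover have "(\<Prod>i\<in>I - maxS leq I. 1 + e i) \<noteq> 0 \<longleftrightarrow> S \<inter> (I - maxS leq I) = {}"
      using fI one_e IO by auto
    ultimately show ?thesis unfolding g_def by simp
  qed
  have coeffI: "coeff (F_poly \<Omega> G leq \<alpha>) l = (\<Sum>I\<in>{I\<in>Pow \<Omega>. dclosed \<Omega> leq I \<and> card I = l}. g I)" for l
  proof -
    have "coeff (F_poly \<Omega> G leq \<alpha>) l = (\<Sum>T\<in>{T\<in>Pow \<Omega>. wt \<Omega> leq T = l}. \<Prod>i\<in>T. e i)"
      unfolding e_def by (rule coeff_F_T[OF fin grp fcar chars])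
    also have "\<dots> = (\<Sum>I\<in>{I\<in>Pow \<Omega>. dclosed \<Omega> leq I \<and> card I = l}.
        \<Sum>T\<in>{T\<in>Pow \<Omega>. ideal_gen \<Omega> leq T = I}. \<Prod>i\<in>T. e i)"
      by (rule sum_over_ideals[OF fin P])
    also have "\<dots> = (\<Sum>I\<in>{I\<in>Pow \<Omega>. dclosed \<Omega> leq I \<and> card I = l}. g I)"
      unfolding g_def by (intro sum.cong refl ideal_sum[OF fin P]) simp
    finally show ?thesis .
  qed
  have JK: "card J = K" unfolding J_def K_def by (rule Jset_card[OF fin P SO])
  have Jd: "dclosed \<Omega> leq J" unfolding J_def by (rule Jset_dclosed[OF P SO])
  have fJ: "finite J" using Jd fin unfolding dclosed_def by (meson finite_subset)
  have gJ: "g J \<noteq> 0" using gnz[OF Jd] Jset_good[OF P SO] unfolding J_def by simp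
  have sub: "I \<subseteq> J" if "dclosed \<Omega> leq I" "g I \<noteq> 0" for I
    using good_sub_Jset[OF P SO that(1)] gnz[OF that(1)] that(2) unfolding J_def by blast
  have hi: "coeff (F_poly \<Omega> G leq \<alpha>) l = 0" if l: "K < l" for l
    unfolding coeffI
  proof (rule sum.neutral, rule ballI)
    fix I assume I: "I \<in> {I\<in>Pow \<Omega>. dclosed \<Omega> leq I \<and> card I = l}"
    show "g I = 0"
    proof (rule ccontr)
      assume "g I \<noteq> 0"
      then have "I \<subseteq> J" using sub I by blast
      then have "card I \<le> card J" using fJ by (rule card_mono[rotated])
      then show False using I JK l by simp
    qed
  qed
  have atK: "coeff (F_poly \<Omega> G leq \<alpha>) K = g J"
    unfolding coeffI
  proof -
    let ?X = "{I\<in>Pow \<Omega>. dclosed \<Omega> leq I \<and> card I = K}"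
    have JX: "J \<in> ?X" using Jd JK unfolding dclosed_def by blast
    have "(\<Sum>I\<in>?X. g I) = g J + (\<Sum>I\<in>?X - {J}. g I)"
      using JX fin by (intro sum.remove) auto
    also have "(\<Sum>I\<in>?X - {J}. g I) = 0"
    proof (rule sum.neutral, rule ballI)
      fix I assume I: "I \<in> ?X - {J}"
      show "g I = 0"
      proof (rule ccontr)
        assume "g I \<noteq> 0"
        then have "I \<subseteq> J" using sub I by blast
        then have "I = J" using card_subset_eq[OF fJ] I JK by auto
        then show False using I by simp
      qed
    qed
    finally show "(\<Sum>I\<in>?X. g I) = g J" by simp
  qed
  have "degree (F_poly \<Omega> G leq \<alpha>) = K"
  proof (rule antisym)
    show "degree (F_poly \<Omega> G leq \<alpha>) \<le> K" using hi by (intro degree_le) auto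
    show "K \<le> degree (F_poly \<Omega> G leq \<alpha>)" using atK gJ by (intro le_degree) simp
  qed
  then show ?thesis unfolding K_def S_def .
qed

lemma pow_cycle:
  fixes G (structure)
  assumes Gg: "group G" and fin: "finite (carrier G)" and g: "g \<in> carrier G"
  shows "\<exists>N::nat. 0 < N \<and> g [^] N = \<one>"
proof -
  interpret group G by (rule Gg)
  have "\<not> inj_on (\<lambda>k::nat. g [^] k) {0..card (carrier G)}"
  proof
    assume inj: "inj_on (\<lambda>k::nat. g [^] k) {0..card (carrier G)}"
    have "card {0..card (carrier G)} \<le> card (carrier G)"
      by (rule card_inj_on_le[OF inj _ fin]) (use g in auto)
    then show False by simp
  qed
  then obtain a b :: nat where ab: "a \<noteq> b" "g [^] a = g [^] b" unfolding inj_on_def by blast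
  have key: "g [^] (y - x) = \<one>" if "x < y" "g [^] x = g [^] (y::nat)" for x y
  proof -
    have "g [^] y = g [^] x \<otimes> g [^] (y - x)" using g that(1) by (simp add: nat_pow_mult)
    then have "g [^] x \<otimes> g [^] (y - x) = g [^] x \<otimes> \<one>" using that(2) g by simp
    then show ?thesis using g by (metis Units_eq Units_l_cancel nat_pow_closed one_closed)
  qed
  show ?thesis
  proof (cases "a < b")
    case True then show ?thesis using key[OF True ab(2)] by (intro exI[of _ "b - a"]) simp
  next
    case False then have "b < a" using ab(1) by simp
    then show ?thesis using key[OF _ ab(2)[symmetric]] by (intro exI[of _ "a - b"]) simp
  qed
qed


lemma cis_ne_1:
  assumes p: "2 \<le> p"
  shows "cis (2 * pi / real p) \<noteq> 1"
proof
  assume "cis (2 * pi / real p) = 1"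
  then have "cos (2 * pi / real p) = 1" by (metis Re_complex_of_real cis.sel(1) of_real_1 one_complex.sel(1))
  then obtain n :: int where n: "2 * pi / real p = real_of_int n * 2 * pi" using cos_one_2pi_int by blast
  then have "(2 * pi) * (1 / real p) = (2 * pi) * real_of_int n" by (simp add: algebra_simps)
  then have "1 / real p = real_of_int n" using pi_gt_zero by (metis mult_left_cancel pi_neq_zero zero_neq_numeral mult_eq_0_iff)
  moreover have "0 < 1 / real p" "1 / real p < 1" using p by auto
  ultimately have "0 < n" "n < 1" by simp_all
  then show False by simp
qed

lemma nontriv_char:
  fixes G (structure)
  assumes CG: "comm_group G" and fin: "finite (carrier G)" and card2: "2 \<le> card (carrier G)"
  shows "\<exists>\<chi>. character G \<chi> \<and> \<not> trivial_character G \<chi>"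
proof -
  interpret comm_group G by (rule CG)
  let ?H = "{H. subgroup H G \<and> H \<noteq> carrier G}"
  have "{\<one>} \<noteq> carrier G"
  proof
    assume "{\<one>} = carrier G"
    then have "card (carrier G) = 1" by (metis card.empty card.insert empty_iff finite.intros(1) One_nat_def)
    then show False using card2 by simp
  qed
  then have triv: "{\<one>} \<in> ?H" using triv_subgroup by auto
  have bnd: "\<forall>H. H \<in> ?H \<longrightarrow> card H < Suc (card (carrier G))"
    using fin by (auto intro!: card_mono dest: subgroup.subset simp: less_Suc_eq_le)
  obtain M where M: "M \<in> ?H" and Mmax: "\<And>H. H \<in> ?H \<Longrightarrow> card H \<le> card M"
    using ex_has_greatest_nat[of "\<lambda>H. H \<in> ?H", OF triv bnd] by blast
  have sM: "subgroup M G" and MG: "M \<noteq> carrier G" using M by auto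
  have Msub: "M \<subseteq> carrier G" using subgroup.subset[OF sM] .
  obtain g where g: "g \<in> carrier G" "g \<notin> M" using Msub MG by blast
  have Mpow: "x [^] (n::nat) \<in> M" if "x \<in> M" for x n
  proof (induction n)
    case 0 then show ?case using subgroup.one_closed[OF sM] by simp
  next
    case (Suc n) then show ?case using subgroup.m_closed[OF sM] that by simp
  qed
  have Mm: "x \<otimes> y \<in> M" if "x \<in> M" "y \<in> M" for x y using subgroup.m_closed[OF sM] that .
  have Mi: "inv x \<in> M" if "x \<in> M" for x using subgroup.m_inv_closed[OF sM] that .
  have Mc: "x \<in> carrier G" if "x \<in> M" for x using Msub that by blast
  obtain N :: nat where N0: "0 < N" and gN: "g [^] N = \<one>"
    using pow_cycle[OF is_group fin g(1)] by blast
  define T where "T = {x. \<exists>k m. m \<in> M \<and> x = g [^] (k::nat) \<otimes> m}"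
  have Tsub: "T \<subseteq> carrier G" unfolding T_def using g Mc by auto
  have ginv: "inv (g [^] k) = g [^] (k * (N - 1))" for k :: nat
  proof -
    have "g [^] (k * (N - 1)) \<otimes> g [^] k = g [^] (k * (N - 1) + k)" using g by (simp add: nat_pow_mult)
    also have "k * (N - 1) + k = N * k" using N0 by (cases N) (auto simp: algebra_simps)
    also have "g [^] (N * k) = \<one>" using g gN by (simp add: nat_pow_pow[symmetric])
    finally show ?thesis using g by (intro inv_equality) auto
  qed
  have sT: "subgroup T G"
  proof (rule subgroupI)
    show "T \<subseteq> carrier G" by (rule Tsub)
    have "\<one> \<in> T" unfolding T_def using subgroup.one_closed[OF sM] by (intro CollectI exI[of _ 0] exI[of _ \<one>]) auto
    then show "T \<noteq> {}" by blast
  next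
    fix a assume "a \<in> T"
    then obtain k m where km: "m \<in> M" "a = g [^] (k::nat) \<otimes> m" unfolding T_def by blast
    have "inv a = inv (g [^] k) \<otimes> inv m" using km g Mc by (simp add: inv_mult)
    also have "\<dots> = g [^] (k * (N - 1)) \<otimes> inv m" by (simp add: ginv)
    finally show "inv a \<in> T" unfolding T_def using Mi[OF km(1)] by blast
  next
    fix a b assume "a \<in> T" "b \<in> T"
    then obtain k m j m' where km: "m \<in> M" "a = g [^] (k::nat) \<otimes> m" and jm: "m' \<in> M" "b = g [^] (j::nat) \<otimes> m'"
      unfolding T_def by blast
    have "a \<otimes> b = g [^] (k + j) \<otimes> (m \<otimes> m')"
      using km jm g Mc by (simp add: nat_pow_mult[symmetric] m_ac)
    then show "a \<otimes> b \<in> T" unfolding T_def using Mm[OF km(1) jm(1)] by blast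
  qed
  have MT: "M \<subseteq> T" unfolding T_def using Mc by (force intro: exI[of _ 0])
  have gT: "g \<in> T" unfolding T_def using g subgroup.one_closed[OF sM] by (force intro: exI[of _ 1])
  have "card M < card T"
    using MT gT g(2) finite_subset[OF Tsub fin] by (intro psubset_card_mono) auto
  then have Tall: "T = carrier G" using Mmax[of T] sT by fastforce
  define p where "p = (LEAST k::nat. 0 < k \<and> g [^] k \<in> M)"
  have NP: "0 < N \<and> g [^] N \<in> M" using N0 gN subgroup.one_closed[OF sM] by simp
  have pP: "0 < p \<and> g [^] p \<in> M" unfolding p_def
    by (rule LeastI[where P="\<lambda>k::nat. 0 < k \<and> g [^] k \<in> M", OF NP])
  have pmin: "p \<le> k" if "0 < k" "g [^] k \<in> M" for k unfolding p_def using that by (intro Least_le) auto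
  have p2: "2 \<le> p"
  proof (rule ccontr)
    assume "\<not> 2 \<le> p"
    then have "p = 1" using pP by simp
    then show False using pP g by simp
  qed
  have dvdM: "p dvd t" if t: "g [^] t \<in> M" for t
  proof -
    define q where "q = (g [^] p) [^] (t div p)"
    have qM: "q \<in> M" unfolding q_def using Mpow pP by blast
    have "g [^] t = g [^] (p * (t div p) + t mod p)" by simp
    also have "\<dots> = g [^] (p * (t div p)) \<otimes> g [^] (t mod p)" by (rule nat_pow_mult[symmetric, OF g(1)])
    also have "g [^] (p * (t div p)) = q" unfolding q_def by (rule nat_pow_pow[symmetric, OF g(1)])
    finally have e: "g [^] t = q \<otimes> g [^] (t mod p)" .
    have "g [^] (t mod p) = inv q \<otimes> g [^] t" using e qM Mc g by (simp add: m_assoc[symmetric])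
    then have "g [^] (t mod p) \<in> M" using Mm[OF Mi[OF qM] t] by simp
    moreover have "t mod p < p" using pP by simp
    ultimately have "t mod p = 0" using pmin by (meson not_gr0 not_le)
    then show ?thesis by (simp add: dvd_eq_mod_eq_0)
  qed
  have diff: "p dvd (a - b)" if e: "g [^] a \<otimes> m = g [^] b \<otimes> m'" and m: "m \<in> M" "m' \<in> M" and ba: "b \<le> a"
    for a b :: nat and m m'
  proof -
    have "g [^] a = g [^] b \<otimes> g [^] (a - b)" using g ba by (simp add: nat_pow_mult)
    then have "g [^] b \<otimes> (g [^] (a - b) \<otimes> m) = g [^] b \<otimes> m'" using e g m Mc by (simp add: m_assoc)
    then have "g [^] (a - b) \<otimes> m = m'" using g m Mc by (metis Units_eq Units_l_cancel nat_pow_closed m_closed)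
    then have "g [^] (a - b) = m' \<otimes> inv m" using g m Mc by (metis inv_solve_right nat_pow_closed)
    then have "g [^] (a - b) \<in> M" using Mm[OF m(2) Mi[OF m(1)]] by simp
    then show ?thesis by (rule dvdM)
  qed
  define \<omega> where "\<omega> = cis (2 * pi / real p)"
  have wp: "\<omega> ^ p = 1" unfolding \<omega>_def DeMoivre using p2 by simp
  have wdvd: "\<omega> ^ d = 1" if pd: "p dvd d" for d
  proof -
    obtain j where "d = p * j" using pd by (auto elim: dvdE)
    then show ?thesis using wp by (simp add: power_mult)
  qed
  have weq: "\<omega> ^ a = \<omega> ^ b" if e: "g [^] a \<otimes> m = g [^] b \<otimes> m'" and m: "m \<in> M" "m' \<in> M" for a b m m'
  proof (cases "b \<le> a")
    case True
    then have "\<omega> ^ a = \<omega> ^ b * \<omega> ^ (a - b)" by (simp add: power_add[symmetric])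
    then show ?thesis using wdvd[OF diff[OF e m True]] by simp
  next
    case False
    then have "\<omega> ^ b = \<omega> ^ a * \<omega> ^ (b - a)" by (simp add: power_add[symmetric])
    then show ?thesis using wdvd[OF diff[OF e[symmetric] m(2) m(1)]] False by simp
  qed
  define \<chi> where "\<chi> x = \<omega> ^ (SOME k::nat. \<exists>m\<in>M. x = g [^] k \<otimes> m)" for x
  have chiv: "\<chi> (g [^] a \<otimes> m) = \<omega> ^ a" if m: "m \<in> M" for a :: nat and m
  proof -
    let ?k = "SOME k::nat. \<exists>m'\<in>M. g [^] a \<otimes> m = g [^] k \<otimes> m'"
    have "\<exists>k::nat. \<exists>m'\<in>M. g [^] a \<otimes> m = g [^] k \<otimes> m'" using m by blast
    then have "\<exists>m'\<in>M. g [^] a \<otimes> m = g [^] ?k \<otimes> m'" by (rule someI_ex)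
    then obtain m' where "m' \<in> M" "g [^] a \<otimes> m = g [^] ?k \<otimes> m'" by blast
    then have "\<omega> ^ a = \<omega> ^ ?k" using weq m by blast
    then show ?thesis unfolding \<chi>_def by simp
  qed
  have "character G \<chi>"
    unfolding character_def
  proof (intro conjI ballI)
    fix x assume "x \<in> carrier G"
    show "\<chi> x \<noteq> 0" unfolding \<chi>_def \<omega>_def by simp
  next
    fix x y assume x: "x \<in> carrier G" and y: "y \<in> carrier G"
    obtain k m where km: "m \<in> M" "x = g [^] (k::nat) \<otimes> m" using x Tall unfolding T_def by blast
    obtain j m' where jm: "m' \<in> M" "y = g [^] (j::nat) \<otimes> m'" using y Tall unfolding T_def by blast
    have "x \<otimes> y = g [^] (k + j) \<otimes> (m \<otimes> m')"
      using km jm g Mc by (simp add: nat_pow_mult[symmetric] m_ac)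
    then have "\<chi> (x \<otimes> y) = \<omega> ^ (k + j)" using chiv Mm[OF km(1) jm(1)] by simp
    also have "\<dots> = \<chi> x * \<chi> y" using chiv km jm by (simp add: power_add)
    finally show "\<chi> (x \<otimes> y) = \<chi> x * \<chi> y" .
  qed
  moreover have "\<not> trivial_character G \<chi>"
  proof -
    have "g = g [^] (1::nat) \<otimes> \<one>" using g by simp
    then have "\<chi> g = \<omega>" using chiv[OF subgroup.one_closed[OF sM], of 1] by simp
    then have "\<chi> g \<noteq> 1" using cis_ne_1[OF p2] unfolding \<omega>_def by simp
    then show ?thesis unfolding trivial_character_def using g(1) by blast
  qed
  ultimately show ?thesis by blast
qed

lemma wt_dual: "wt \<Omega> (dual_order leq) S = card (upS \<Omega> leq S)"
  unfolding wt_def ideal_gen_def dual_order_def upS_def ..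

lemma char_const1: "character G (\<lambda>_. 1)" unfolding character_def by simp

theorem theorem2p3:
  fixes \<Omega> :: "'b set" and G :: "'b \<Rightarrow> ('a, 'c) monoid_scheme"
    and leq :: "'b \<Rightarrow> 'b \<Rightarrow> bool"
  assumes "finite \<Omega>"
    and "\<And>i. i \<in> \<Omega> \<Longrightarrow> comm_group (G i)"
    and "\<And>i. i \<in> \<Omega> \<Longrightarrow> finite (carrier (G i))"
    and "\<And>i. i \<in> \<Omega> \<Longrightarrow> card (carrier (G i)) \<ge> 2"
    and "is_poset \<Omega> leq"
  shows "hierarchical \<Omega> leq \<longleftrightarrow>
    (\<forall>\<alpha> \<gamma>. char_family \<Omega> G \<alpha> \<and> char_family \<Omega> G \<gamma> \<and>
        wt \<Omega> (dual_order leq) (char_supp \<Omega> G \<alpha>) = wt \<Omega> (dual_order leq) (char_supp \<Omega> G \<gamma>)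
        \<longrightarrow> degree (F_poly \<Omega> G leq \<alpha>) = degree (F_poly \<Omega> G leq \<gamma>))"
proof -
  note fin = assms(1) and fcar = assms(3) and card2 = assms(4) and P = assms(5)
  have grp: "group (G i)" if "i \<in> \<Omega>" for i using assms(2)[OF that] unfolding comm_group_def by blast
  note deg = degree_F[OF fin grp fcar card2 P]
  have suppO: "char_supp \<Omega> G \<alpha> \<subseteq> \<Omega>" for \<alpha> unfolding char_supp_def by blast
  show ?thesis
  proof
    assume H: "hierarchical \<Omega> leq"
    show "\<forall>\<alpha> \<gamma>. char_family \<Omega> G \<alpha> \<and> char_family \<Omega> G \<gamma> \<and>
        wt \<Omega> (dual_order leq) (char_supp \<Omega> G \<alpha>) = wt \<Omega> (dual_order leq) (char_supp \<Omega> G \<gamma>)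
        \<longrightarrow> degree (F_poly \<Omega> G leq \<alpha>) = degree (F_poly \<Omega> G leq \<gamma>)"
    proof (intro allI impI)
      fix \<alpha> \<gamma> assume h: "char_family \<Omega> G \<alpha> \<and> char_family \<Omega> G \<gamma> \<and>
        wt \<Omega> (dual_order leq) (char_supp \<Omega> G \<alpha>) = wt \<Omega> (dual_order leq) (char_supp \<Omega> G \<gamma>)"
      then have cu: "card (upS \<Omega> leq (char_supp \<Omega> G \<alpha>)) = card (upS \<Omega> leq (char_supp \<Omega> G \<gamma>))"
        unfolding wt_dual by blast
      have cm: "card (minS leq (char_supp \<Omega> G \<alpha>)) = card (minS leq (char_supp \<Omega> G \<gamma>))"
        by (rule hier_card_min[OF fin P H suppO suppO cu])
      show "degree (F_poly \<Omega> G leq \<alpha>) = degree (F_poly \<Omega> G leq \<gamma>)"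
        using deg[where \<alpha>=\<alpha>] deg[where \<alpha>=\<gamma>] h cu cm by simp
    qed
  next
    assume R: "\<forall>\<alpha> \<gamma>. char_family \<Omega> G \<alpha> \<and> char_family \<Omega> G \<gamma> \<and>
        wt \<Omega> (dual_order leq) (char_supp \<Omega> G \<alpha>) = wt \<Omega> (dual_order leq) (char_supp \<Omega> G \<gamma>)
        \<longrightarrow> degree (F_poly \<Omega> G leq \<alpha>) = degree (F_poly \<Omega> G leq \<gamma>)"
    show "hierarchical \<Omega> leq"
    proof (rule ccontr)
      assume nH: "\<not> hierarchical \<Omega> leq"
      then have W: "Wprop \<Omega> leq" using notW_hier[OF fin P] by blast
      obtain S S' where S: "S \<subseteq> \<Omega>" and S': "S' \<subseteq> \<Omega>"
        and cu: "card (upS \<Omega> leq S) = card (upS \<Omega> leq S')"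
        and cm: "card (minS leq S) \<noteq> card (minS leq S')"
        using W_witness[OF fin P W] by blast
      define nt where "nt i = (SOME \<chi>. character (G i) \<chi> \<and> \<not> trivial_character (G i) \<chi>)" for i
      have nt: "character (G i) (nt i) \<and> \<not> trivial_character (G i) (nt i)" if i: "i \<in> \<Omega>" for i
      proof -
        have ex: "\<exists>\<chi>. character (G i) \<chi> \<and> \<not> trivial_character (G i) \<chi>"
          by (rule nontriv_char[OF assms(2)[OF i] fcar[OF i] card2[OF i]])
        show ?thesis unfolding nt_def using someI_ex[OF ex] .
      qed
      define fam where "fam X i = (if i \<in> X then nt i else (\<lambda>_. 1))" for X i
      have famc: "char_family \<Omega> G (fam X)" for X
        unfolding char_family_def fam_def using nt char_const1 by auto
      have fams: "char_supp \<Omega> G (fam X) = X" if X: "X \<subseteq> \<Omega>" for X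
        unfolding char_supp_def fam_def trivial_character_def using nt X
        by (auto simp: trivial_character_def)
      have "degree (F_poly \<Omega> G leq (fam S)) = degree (F_poly \<Omega> G leq (fam S'))"
        using R famc fams[OF S] fams[OF S'] cu unfolding wt_dual by metis
      then have "card \<Omega> - card (upS \<Omega> leq S) + card (minS leq S) =
          card \<Omega> - card (upS \<Omega> leq S') + card (minS leq S')"
        using deg[where \<alpha>="fam S"] deg[where \<alpha>="fam S'"] famc fams[OF S] fams[OF S'] by simp
      then show False using cu cm by simp
    qed
  qed
qed

end
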